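(* Let $(G,\cdot)$ be a WIPL with identity $e$, let $(H,\circ)$ be a WIPL with identity $e'$, and let $(A,B,C)$ be an isotopism from $(G,\cdot)$ to $(H,\circ)$. Put $a=e'A^{-1}$ and $b=e'B^{-1}$. Then $C$ is an isomorphism from $(G,\cdot)$ onto $(H,\circ)$ if and only if $(J_\rho L_b J_\lambda,\ J_\lambda R_a J_\rho,\ I)\in AUT(G,\cdot)$. Moreover, when these equivalent conditions hold, $(J_\lambda R_a J_\rho,\ J_\rho L_b J_\lambda,\ R_aL_b)\in AUT(G,\cdot)$, and if in addition $x\cdot x=e$ for all $x\in G$, then $(R_a,L_b,R_aL_b)\in AUT(G,\cdot)$.
   Context: Maps are written on the right of their arguments ($xU$) and composed left to right: $UV$ means first apply $U$, then $V$; $I$ is the identity map. For a loop $(L,\cdot)$ with identity $e$, $x^\rho$ and $x^\lambda$ denote the right and left inverses of $x$ ($x x^\rho=e=x^\lambda x$), and $J_\rho:x\mapsto x^\rho$, $J_\lambda:x\mapsto x^\lambda$, $L_x:y\mapsto xy$, $R_x:y\mapsto yx$ (so $J_\lambda=J_\rho^{-1}$). $L$ is a weak inverse property loop (WIPL) if $xy\cdot z=e$ implies $x\cdot yz=e$ for all $x,y,z\in L$. A triple $(U,V,W)$ of bijections $G\to H$ between loops $(G,\cdot)$ and $(H,\circ)$ is an isotopism if $xU\circ yV=(x\cdot y)W$ for all $x,y\in G$; an autotopism of $G$ is an isotopism from $G$ to itself, and $AUT(G,\cdot)$ denotes the group of autotopisms under componentwise composition. *)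

theory Defs
  imports Main
begin

text \<open>A loop with multiplication mult and identity e, carried by the whole type.
  Maps are ordinary HOL functions; the paper's left-to-right product UV is V o U.\<close>

definition loop :: "('a \<Rightarrow> 'a \<Rightarrow> 'a) \<Rightarrow> 'a \<Rightarrow> bool" where
  "loop mult e \<longleftrightarrow>
     (\<forall>x. mult e x = x \<and> mult x e = x) \<and>
     (\<forall>a b. \<exists>!x. mult a x = b) \<and>
     (\<forall>a b. \<exists>!y. mult y a = b)"

definition WIPL :: "('a \<Rightarrow> 'a \<Rightarrow> 'a) \<Rightarrow> 'a \<Rightarrow> bool" where
  "WIPL mult e \<longleftrightarrow> loop mult e \<and>
     (\<forall>x y z. mult (mult x y) z = e \<longrightarrow> mult x (mult y z) = e)"

definition rinv :: "('a \<Rightarrow> 'a \<Rightarrow> 'a) \<Rightarrow> 'a \<Rightarrow> 'a \<Rightarrow> 'a" where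
  "rinv mult e x = (THE y. mult x y = e)"

definition linv :: "('a \<Rightarrow> 'a \<Rightarrow> 'a) \<Rightarrow> 'a \<Rightarrow> 'a \<Rightarrow> 'a" where
  "linv mult e x = (THE y. mult y x = e)"

definition isotopism ::
  "('a \<Rightarrow> 'a \<Rightarrow> 'a) \<Rightarrow> ('b \<Rightarrow> 'b \<Rightarrow> 'b) \<Rightarrow> ('a \<Rightarrow> 'b) \<Rightarrow> ('a \<Rightarrow> 'b) \<Rightarrow> ('a \<Rightarrow> 'b) \<Rightarrow> bool" where
  "isotopism multG multH U V W \<longleftrightarrow> bij U \<and> bij V \<and> bij W \<and>
     (\<forall>x y. multH (U x) (V y) = W (multG x y))"

definition AUT :: "('a \<Rightarrow> 'a \<Rightarrow> 'a) \<Rightarrow> (('a \<Rightarrow> 'a) \<times> ('a \<Rightarrow> 'a) \<times> ('a \<Rightarrow> 'a)) set" where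
  "AUT mult = {(U, V, W). isotopism mult mult U V W}"

definition loop_isomorphism :: "('a \<Rightarrow> 'a \<Rightarrow> 'a) \<Rightarrow> ('b \<Rightarrow> 'b \<Rightarrow> 'b) \<Rightarrow> ('a \<Rightarrow> 'b) \<Rightarrow> bool" where
  "loop_isomorphism multG multH f \<longleftrightarrow> bij f \<and> (\<forall>x y. f (multG x y) = multH (f x) (f y))"

end

theory Submission
  imports Defs
begin

lemma wl: "WIPL m e \<Longrightarrow> loop m e" by (simp add: WIPL_def)

lemma lid: "WIPL m e \<Longrightarrow> m e x = x" by (simp add: WIPL_def loop_def)
lemma rid: "WIPL m e \<Longrightarrow> m x e = x" by (simp add: WIPL_def loop_def)

lemma lcanc: "WIPL m e \<Longrightarrow> m a x = m a y \<Longrightarrow> x = y"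
  unfolding WIPL_def loop_def by metis
lemma rcanc: "WIPL m e \<Longrightarrow> m x a = m y a \<Longrightarrow> x = y"
  unfolding WIPL_def loop_def by metis
lemma lsolv: "WIPL m e \<Longrightarrow> \<exists>x. m a x = c"
  unfolding WIPL_def loop_def by metis
lemma rsolv: "WIPL m e \<Longrightarrow> \<exists>x. m x a = c"
  unfolding WIPL_def loop_def by metis

lemma rinv: assumes "WIPL m e" shows "m x (rinv m e x) = e"
proof -
  have "\<exists>!y. m x y = e" using assms unfolding WIPL_def loop_def by blast
  thus ?thesis unfolding rinv_def by (rule theI')
qed
lemma linv: assumes "WIPL m e" shows "m (linv m e x) x = e"
proof -
  have "\<exists>!y. m y x = e" using assms unfolding WIPL_def loop_def by blast
  thus ?thesis unfolding linv_def by (rule theI')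
qed
lemma rinv_u: assumes "WIPL m e" "m x y = e" shows "rinv m e x = y"
  using rinv[OF assms(1), of x] assms lcanc by metis
lemma linv_u: assumes "WIPL m e" "m y x = e" shows "linv m e x = y"
  using linv[OF assms(1), of x] assms rcanc by metis

lemma wip: "WIPL m e \<Longrightarrow> m (m x y) z = e \<Longrightarrow> m x (m y z) = e"
  by (simp add: WIPL_def)

lemma wip_conv: assumes "WIPL m e" "m x (m y z) = e" shows "m (m x y) z = e"
proof -
  have "m x (m y (rinv m e (m x y))) = e" using wip[OF assms(1) rinv[OF assms(1)]] .
  hence "m y (rinv m e (m x y)) = m y z" using assms lcanc by metis
  hence "rinv m e (m x y) = z" using assms(1) lcanc by metis
  thus ?thesis using rinv[OF assms(1)] by metis
qed

lemma wip1: assumes "WIPL m e" shows "m x (rinv m e (m y x)) = rinv m e y"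
  using wip[OF assms rinv[OF assms, of "m y x"]] rinv_u[OF assms] by metis

lemma wip2: assumes "WIPL m e" shows "m (linv m e (m x y)) x = linv m e y"
  using wip_conv[OF assms, of "linv m e (m x y)" x y] linv[OF assms, of "m x y"] linv_u[OF assms]
  by metis

lemma rl: "WIPL m e \<Longrightarrow> rinv m e (linv m e x) = x"
  using rinv_u linv by metis
lemma lr: "WIPL m e \<Longrightarrow> linv m e (rinv m e x) = x"
  using linv_u rinv by metis

lemma bij_r: "WIPL m e \<Longrightarrow> bij (rinv m e)"
  by (rule o_bij[of "linv m e"]) (auto simp: fun_eq_iff rl lr)
lemma bij_l: "WIPL m e \<Longrightarrow> bij (linv m e)"
  by (rule o_bij[of "rinv m e"]) (auto simp: fun_eq_iff rl lr)
lemma bij_L: "WIPL m e \<Longrightarrow> bij (\<lambda>y. m b y)"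
  unfolding bij_def inj_def surj_def using lcanc lsolv by metis
lemma bij_R: "WIPL m e \<Longrightarrow> bij (\<lambda>y. m y a)"
  unfolding bij_def inj_def surj_def using rcanc rsolv by metis

lemma Tp: assumes G: "WIPL m e" and h: "\<And>u v. m (U u) (V v) = W (m u v)"
  shows "m (linv m e (W (rinv m e s))) (U u) = linv m e (V (rinv m e (m s u)))"
proof -
  let ?v = "rinv m e (m s u)"
  have "m s (m u ?v) = e" using wip[OF G rinv[OF G]] .
  hence "rinv m e s = m u ?v" using rinv_u[OF G] by metis
  hence "W (rinv m e s) = m (U u) (V ?v)" using h by simp
  thus ?thesis using wip2[OF G] by simp
qed

lemma Tq: assumes G: "WIPL m e" and h: "\<And>u v. m (U u) (V v) = W (m u v)"
  shows "m (V v) (rinv m e (W (linv m e t))) = rinv m e (U (linv m e (m v t)))"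
proof -
  let ?u = "linv m e (m v t)"
  have "m (m ?u v) t = e" using wip_conv[OF G linv[OF G]] .
  hence "linv m e t = m ?u v" using linv_u[OF G] by metis
  hence "W (linv m e t) = m (U ?u) (V v)" using h by simp
  thus ?thesis using wip1[OF G] by simp
qed

theorem mainTheorem2:
  fixes mG :: "'a \<Rightarrow> 'a \<Rightarrow> 'a" and e :: 'a
    and mH :: "'b \<Rightarrow> 'b \<Rightarrow> 'b" and e' :: 'b
    and A B C :: "'a \<Rightarrow> 'b"
  assumes "WIPL mG e" and "WIPL mH e'" and "isotopism mG mH A B C"
  defines "a \<equiv> inv A e'" and "b \<equiv> inv B e'"
  shows "(loop_isomorphism mG mH C \<longleftrightarrow>
            (linv mG e \<circ> (\<lambda>y. mG b y) \<circ> rinv mG e,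
             rinv mG e \<circ> (\<lambda>y. mG y a) \<circ> linv mG e,
             id) \<in> AUT mG)
       \<and> (loop_isomorphism mG mH C \<longrightarrow>
            (rinv mG e \<circ> (\<lambda>y. mG y a) \<circ> linv mG e,
             linv mG e \<circ> (\<lambda>y. mG b y) \<circ> rinv mG e,
             (\<lambda>y. mG b y) \<circ> (\<lambda>y. mG y a)) \<in> AUT mG
          \<and> ((\<forall>x. mG x x = e) \<longrightarrow>
               ((\<lambda>y. mG y a), (\<lambda>y. mG b y), (\<lambda>y. mG b y) \<circ> (\<lambda>y. mG y a)) \<in> AUT mG))"
proof -
  note G = assms(1) and H = assms(2)
  have bA: "bij A" and bB: "bij B" and bC: "bij C"
    and iso: "\<And>x y. mH (A x) (B y) = C (mG x y)"
    using assms(3) unfolding isotopism_def by auto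
  have Aa: "A a = e'" unfolding a_def using bA by (simp add: bij_is_surj surj_f_inv_f)
  have Bb: "B b = e'" unfolding b_def using bB by (simp add: bij_is_surj surj_f_inv_f)
  have CA: "\<And>x. C (mG x b) = A x" using iso[symmetric, of _ b] Bb rid[OF H] by simp
  have CB: "\<And>y. C (mG a y) = B y" using iso[symmetric, of a] Aa lid[OF H] by simp
  have injC: "inj C" using bC bij_is_inj by blast
  define S where "S \<longleftrightarrow> (\<forall>x y. mG (mG x b) (mG a y) = mG x y)"
  have iso_S: "loop_isomorphism mG mH C \<longleftrightarrow> S"
  proof
    assume "loop_isomorphism mG mH C"
    hence h: "\<And>x y. C (mG x y) = mH (C x) (C y)" unfolding loop_isomorphism_def by auto
    show S unfolding S_def
    proof (intro allI)
      fix x y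
      have "C (mG (mG x b) (mG a y)) = C (mG x y)" using h CA CB iso by metis
      thus "mG (mG x b) (mG a y) = mG x y" using injC by (simp add: inj_eq)
    qed
  next
    assume S
    show "loop_isomorphism mG mH C" unfolding loop_isomorphism_def
    proof (intro conjI allI bC)
      fix u v
      obtain x where x: "mG x b = u" using rsolv[OF G] by blast
      obtain y where y: "mG a y = v" using lsolv[OF G] by blast
      have "C (mG u v) = C (mG x y)" using \<open>S\<close> x y unfolding S_def by metis
      thus "C (mG u v) = mH (C u) (C v)" using iso CA CB x y by metis
    qed
  qed
  define P where "P = linv mG e \<circ> (\<lambda>y. mG b y) \<circ> rinv mG e"
  define Q where "Q = rinv mG e \<circ> (\<lambda>y. mG y a) \<circ> linv mG e"
  have bP: "bij P" unfolding P_def using bij_r[OF G] bij_l[OF G] bij_L[OF G]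
    by (intro bij_comp) auto
  have bQ: "bij Q" unfolding Q_def using bij_r[OF G] bij_l[OF G] bij_R[OF G]
    by (intro bij_comp) auto
  have Pb: "\<And>x. mG (P x) b = x" unfolding P_def using wip2[OF G, of b "rinv mG e _"] lr[OF G] by simp
  have aQ: "\<And>y. mG a (Q y) = y" unfolding Q_def using wip1[OF G, of a "linv mG e _"] rl[OF G] by simp
  have P2: "\<And>x. P (mG x b) = x" unfolding P_def using wip1[OF G, of b] lr[OF G] by simp
  have Q2: "\<And>y. Q (mG a y) = y" unfolding Q_def using wip2[OF G, of a] rl[OF G] by simp
  have S_T: "S \<longleftrightarrow> (\<forall>x y. mG (P x) (Q y) = mG x y)"
  proof
    assume S
    show "\<forall>x y. mG (P x) (Q y) = mG x y"
      using \<open>S\<close> Pb aQ unfolding S_def by metis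
  next
    assume h: "\<forall>x y. mG (P x) (Q y) = mG x y"
    show S unfolding S_def
      using h P2 Q2 by metis
  qed
  have part1: "loop_isomorphism mG mH C \<longleftrightarrow> (P, Q, id) \<in> AUT mG"
    unfolding iso_S S_T AUT_def isotopism_def using bP bQ by auto
  have part2: "S \<longrightarrow> (Q, P, (\<lambda>y. mG b y) \<circ> (\<lambda>y. mG y a)) \<in> AUT mG"
  proof
    assume S
    hence T: "\<And>x y. mG (P x) (Q y) = mG x y" using S_T by auto
    have st1: "\<And>x y. mG x (P y) = mG (mG x y) a"
    proof -
      fix x y
      have "mG (linv mG e (id (rinv mG e x))) (P y) = linv mG e (Q (rinv mG e (mG x y)))"
        by (rule Tp[OF G]) (simp add: T)
      thus "mG x (P y) = mG (mG x y) a" by (simp add: Q_def lr[OF G] rl[OF G])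
    qed
    have st2: "\<And>x y. mG (Q x) y = mG b (mG x y)"
    proof -
      fix x y
      have "mG (Q x) (rinv mG e (id (linv mG e y))) = rinv mG e (P (linv mG e (mG x y)))"
        by (rule Tq[OF G]) (simp add: T)
      thus "mG (Q x) y = mG b (mG x y)" by (simp add: P_def lr[OF G] rl[OF G])
    qed
    have bW: "bij ((\<lambda>y. mG b y) \<circ> (\<lambda>y. mG y a))"
      using bij_L[OF G] bij_R[OF G] by (intro bij_comp) auto
    show "(Q, P, (\<lambda>y. mG b y) \<circ> (\<lambda>y. mG y a)) \<in> AUT mG"
      unfolding AUT_def isotopism_def using bP bQ bW st1 st2 by simp
  qed
  have part3: "(\<forall>x. mG x x = e) \<Longrightarrow> Q = (\<lambda>y. mG y a) \<and> P = (\<lambda>y. mG b y)"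
  proof -
    assume sq: "\<forall>x. mG x x = e"
    hence r: "\<And>x. rinv mG e x = x" and l: "\<And>x. linv mG e x = x"
      using rinv_u[OF G] linv_u[OF G] by auto
    show ?thesis unfolding P_def Q_def by (simp add: r l fun_eq_iff)
  qed
  show ?thesis
    using part1 part2 part3 iso_S unfolding P_def[symmetric] Q_def[symmetric] by auto

qed

end
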